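(* For all $\epsilon\in[0,1]$ and all $z\in(0,+\infty)^{d_1}\times\{0\}^{d_2}$, the limit \[ \sigma^{\mathcal D}_\epsilon(z):=\lim_{n\to\infty}\frac1n\mathbb{E}\big[S^{\mathcal D}_\epsilon(\lfloor nz\rfloor)\big] \] exists (and is finite).
   Context: Fix $d_1\ge1$, $d_2\ge0$, $d=d_1+d_2$; $\mathbb{Z}^d=\mathbb{Z}^{d_1}\times\mathbb{Z}^{d_2}$, $\mathrm{Proj}^{d_2}$ the projection on the last $d_2$ coordinates, $\lfloor\cdot\rfloor$ the coordinatewise integer part. Sites $x\in\mathbb{Z}^d$ are independently open with probability $\epsilon$. For $x,y\in\mathbb{R}^d$: $x\prec y$ iff $x_i<y_i$ for all $i\le d_1$; $x\preceq y$ iff $x_i\le y_i$ for all $i\le d_1$. For $x\preceq y$ in $\mathbb{Z}^{d_1}\times\{0\}^{d_2}$, $\mathcal{D}_\epsilon(x,y)$ is the set of finite sequences $s=(w(1),\dots,w(k))$, $k\ge0$, of open sites with $x\preceq w(1)\prec\cdots\prec w(k)\prec y$; with $w(0)=x,w(k+1)=y$, $V(s)=\sum_{i=1}^{k+1}\|\mathrm{Proj}^{d_2}(w(i))-\mathrm{Proj}^{d_2}(w(i-1))\|_1$, $R(s)=k$, $S^{\mathcal D}_\epsilon(x,y)=\sup_{s\in\mathcal{D}_\epsilon(x,y)}(R(s)-V(s))$ and $S^{\mathcal D}_\epsilon(y)=S^{\mathcal D}_\epsilon(0,y)$. *)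

theory Defs
  imports "HOL-Probability.Probability"
begin

text \<open>Sites of Z^d, d = d1 + d2, are integer lists of length d; the first d1 entries
  are the "time" coordinates, the last d2 entries the "space" coordinates.\<close>

definition sites :: "nat \<Rightarrow> int list set" where
  "sites d = {x. length x = d}"

definition sprec :: "nat \<Rightarrow> int list \<Rightarrow> int list \<Rightarrow> bool" where
  "sprec d1 x y \<longleftrightarrow> (\<forall>i<d1. x ! i < y ! i)"

definition wprec :: "nat \<Rightarrow> int list \<Rightarrow> int list \<Rightarrow> bool" where
  "wprec d1 x y \<longleftrightarrow> (\<forall>i<d1. x ! i \<le> y ! i)"

definition projdist :: "nat \<Rightarrow> int list \<Rightarrow> int list \<Rightarrow> int" where
  "projdist d1 a b = (\<Sum>j<length a - d1. \<bar>drop d1 a ! j - drop d1 b ! j\<bar>)"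

text \<open>Admissible sequences D_eps(x,y) for configuration omega (open sites = True).\<close>
definition Dpaths :: "nat \<Rightarrow> nat \<Rightarrow> (int list \<Rightarrow> bool) \<Rightarrow> int list \<Rightarrow> int list \<Rightarrow> int list list set" where
  "Dpaths d1 d2 \<omega> x y = {ws. (\<forall>w\<in>set ws. w \<in> sites (d1 + d2) \<and> \<omega> w)
      \<and> sorted_wrt (sprec d1) ws
      \<and> (ws \<noteq> [] \<longrightarrow> wprec d1 x (hd ws) \<and> sprec d1 (last ws) y)}"

definition Vcost :: "nat \<Rightarrow> int list \<Rightarrow> int list list \<Rightarrow> int list \<Rightarrow> int" where
  "Vcost d1 x ws y = (let p = x # ws @ [y] in sum_list (map2 (projdist d1) p (tl p)))"

definition SD :: "nat \<Rightarrow> nat \<Rightarrow> (int list \<Rightarrow> bool) \<Rightarrow> int list \<Rightarrow> int list \<Rightarrow> real" where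
  "SD d1 d2 \<omega> x y = (SUP ws\<in>Dpaths d1 d2 \<omega> x y. real (length ws) - real_of_int (Vcost d1 x ws y))"

definition perc :: "nat \<Rightarrow> real \<Rightarrow> (int list \<Rightarrow> bool) measure" where
  "perc d \<epsilon> = PiM (sites d) (\<lambda>_. measure_pmf (bernoulli_pmf \<epsilon>))"

definition target :: "nat \<Rightarrow> real list \<Rightarrow> nat \<Rightarrow> int list" where
  "target d2 z n = map (\<lambda>r. \<lfloor>real n * r\<rfloor>) z @ replicate d2 0"

end

theory Submission
  imports Defs
begin



lemma superadd_mult:
  fixes a :: "nat \<Rightarrow> real"
  assumes sup: "\<And>m n. a m + a n \<le> a (m+n)" and nn: "\<And>n. 0 \<le> a n"
  shows "real q * a k \<le> a (q*k)"
proof (induction q)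
  case 0 then show ?case using nn by simp
next
  case (Suc q)
  have "real (Suc q) * a k = a k + real q * a k" by (simp add: algebra_simps)
  also have "\<dots> \<le> a k + a (q*k)" using Suc by simp
  also have "\<dots> \<le> a (k + q*k)" using sup by blast
  finally show ?case by (simp add: add.commute)
qed

lemma fekete:
  fixes a :: "nat \<Rightarrow> real"
  assumes sup: "\<And>m n. a m + a n \<le> a (m+n)" and nn: "\<And>n. 0 \<le> a n"
    and bd: "\<And>n. a n \<le> C * real n"
  shows "convergent (\<lambda>n. (1/real n) * a n)"
proof -
  define L where "L = (SUP n\<in>{1..}. a n / real n)"
  have bdd: "bdd_above ((\<lambda>n. a n / real n) ` {1..})"
  proof (rule bdd_aboveI2)
    fix n :: nat assume "n \<in> {1..}"
    then show "a n / real n \<le> C" using bd[of n] by (simp add: divide_le_eq mult.commute)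
  qed
  have upper: "a n / real n \<le> L" if "n \<ge> 1" for n
    unfolding L_def using bdd that by (intro cSUP_upper) auto
  have "(\<lambda>n. a n / real n) \<longlonglongrightarrow> L"
  proof (rule LIMSEQ_I)
    fix r :: real assume r: "0 < r"
    have "L - r/2 < L" using r by simp
    then obtain k where k: "k \<ge> 1" "L - r/2 < a k / real k"
      unfolding L_def using bdd by (subst (asm) less_cSUP_iff) auto
    define N where "N = nat \<lceil>2 * a k / r\<rceil> + k + 1"
    show "\<exists>no. \<forall>n\<ge>no. norm (a n / real n - L) < r"
    proof (intro exI allI impI)
      fix n assume n: "N \<le> n"
      have n1: "n \<ge> 1" "n \<ge> k" using n k unfolding N_def by auto
      have nr: "real n > 2 * a k / r" using n unfolding N_def by linarith
      define q where "q = n div k"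
      have qk: "real n - real k \<le> real q * real k"
      proof -
        have "n = q * k + n mod k" unfolding q_def by simp
        moreover have "n mod k < k" using k by simp
        ultimately have "n \<le> q*k + k" by linarith
        then show ?thesis by (simp add: of_nat_mult[symmetric] del: of_nat_mult)
      qed
      have "a (q*k) \<le> a n"
      proof -
        have "a (q*k) + a (n - q*k) \<le> a n" using sup[of "q*k" "n - q*k"]
          unfolding q_def by (simp add: mult.commute)
        then show ?thesis using nn[of "n - q*k"] by linarith
      qed
      with superadd_mult[OF sup nn, of q k] have aq: "real q * a k \<le> a n" by linarith
      have akn: "a k / real n < r / 2"
        using nr r n1 by (simp add: divide_less_eq field_simps)
      have "(real n - real k) * (a k / real k) \<le> real q * real k * (a k / real k)"
        using qk nn[of k] k by (intro mult_right_mono) auto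
      also have "\<dots> = real q * a k" using k by simp
      finally have "(real n - real k) * (a k / real k) \<le> a n" using aq by linarith
      then have "(real n - real k) * (a k / real k) / real n \<le> a n / real n"
        using n1 by (intro divide_right_mono) auto
      moreover have "(real n - real k) * (a k / real k) / real n = a k / real k - a k / real n"
        using n1 k by (simp add: field_simps)
      ultimately have "a k / real k - a k / real n \<le> a n / real n" by simp
      then have lo: "L - r < a n / real n" using k akn by linarith
      have hi: "a n / real n \<le> L" using upper n1 by simp
      show "norm (a n / real n - L) < r" using lo hi r by simp
    qed
  qed
  then show ?thesis unfolding convergent_def by (auto simp: mult.commute)
qed




fun chain :: "nat \<Rightarrow> int list list \<Rightarrow> int" where
  "chain d1 [] = 0"
| "chain d1 [a] = 0"
| "chain d1 (a # b # r) = projdist d1 a b + chain d1 (b # r)"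

lemma chain_eq: "sum_list (map2 (projdist d1) p (tl p)) = chain d1 p"
  by (induction d1 p rule: chain.induct) auto

lemma Vcost_chain: "Vcost d1 x ws y = chain d1 (x # ws @ [y])"
  unfolding Vcost_def Let_def chain_eq ..

lemma chain_append: "p \<noteq> [] \<Longrightarrow> q \<noteq> [] \<Longrightarrow>
   chain d1 (p @ q) = chain d1 p + projdist d1 (last p) (hd q) + chain d1 q"
proof (induction d1 p rule: chain.induct)
  case (2 d1 a) then show ?case by (cases q) auto
qed auto

lemma projdist_nonneg: "0 \<le> projdist d1 a b"
  unfolding projdist_def by (intro sum_nonneg) auto

lemma chain_nonneg: "0 \<le> chain d1 p"
  by (induction d1 p rule: chain.induct) (auto intro: add_nonneg_nonneg projdist_nonneg)

lemma projdist_tri: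
  assumes "length a = length b" "length b = length c"
  shows "projdist d1 a c \<le> projdist d1 a b + projdist d1 b c"
  unfolding projdist_def using assms
  by (simp add: sum.distrib[symmetric]) (intro sum_mono, linarith)

lemma projdist_drop: "drop d1 b = drop d1 b' \<Longrightarrow> projdist d1 a b = projdist d1 a b'"
  unfolding projdist_def by simp

lemma projdist_same: "drop d1 a = drop d1 b \<Longrightarrow> projdist d1 a b = 0"
  unfolding projdist_def by simp

definition vadd :: "int list \<Rightarrow> int list \<Rightarrow> int list" where
  "vadd u v = map2 (+) u v"

lemma vadd_length[simp]: "length (vadd u v) = min (length u) (length v)"
  unfolding vadd_def by simp

lemma vadd_nth[simp]: "i < length u \<Longrightarrow> i < length v \<Longrightarrow> vadd u v ! i = u ! i + v ! i"
  unfolding vadd_def by simp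

lemma vadd_drop: "drop k (vadd u v) = vadd (drop k u) (drop k v)"
  unfolding vadd_def by (simp add: drop_map drop_zip)

lemma projdist_vadd:
  assumes "length a = length s" "length b = length s"
  shows "projdist d1 (vadd a s) (vadd b s) = projdist d1 a b"
  unfolding projdist_def vadd_drop using assms by (intro sum.cong) auto

lemma vadd_neg: "length w = length t \<Longrightarrow> vadd (vadd w (map uminus t)) t = w"
  by (intro nth_equalityI) auto

lemma chain_map:
  "(\<And>u v. u \<in> set p \<Longrightarrow> v \<in> set p \<Longrightarrow> projdist d1 (f u) (f v) = projdist d1 u v)
   \<Longrightarrow> chain d1 (map f p) = chain d1 p"
  by (induction d1 p rule: chain.induct) auto

lemma len_bound:
  assumes "sorted_wrt (sprec d1) ws" "d1 \<ge> 1" "ws \<noteq> []" "a \<le> hd ws ! 0" "last ws ! 0 < b"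
  shows "int (length ws) \<le> b - a"
  using assms
proof (induction ws arbitrary: a)
  case Nil then show ?case by simp
next
  case (Cons u r)
  show ?case
  proof (cases "r = []")
    case True then show ?thesis using Cons.prems by simp
  next
    case False
    have "sprec d1 u (hd r)" using Cons.prems(1) False by (cases r) auto
    then have "u ! 0 < hd r ! 0" using Cons.prems(2) unfolding sprec_def by auto
    then have "int (length r) \<le> b - (a + 1)"
      using Cons.prems False by (intro Cons.IH) auto
    then show ?thesis by simp
  qed
qed

lemma sorted_wprec_last:
  assumes "sorted_wrt (sprec d1) ws" "u \<in> set ws"
  shows "wprec d1 u (last ws)"
  using assms
proof (induction ws)
  case (Cons a r)
  show ?case
  proof (cases "r = []")
    case True then show ?thesis using Cons.prems by (auto simp: wprec_def)
  next
    case False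
    then have "last r \<in> set r" by simp
    then have "sprec d1 a (last r)" using Cons.prems(1) by auto
    then show ?thesis using Cons False by (auto simp: wprec_def sprec_def less_imp_le)
  qed
qed simp

lemma sorted_wprec_hd:
  assumes "sorted_wrt (sprec d1) ws" "u \<in> set ws"
  shows "wprec d1 (hd ws) u"
  using assms by (cases ws) (auto simp: wprec_def sprec_def less_imp_le)

lemma wprec_trans: "wprec d1 a b \<Longrightarrow> wprec d1 b c \<Longrightarrow> wprec d1 a c"
  unfolding wprec_def by (meson order_trans)

lemma sprec_wprec_trans: "sprec d1 a b \<Longrightarrow> wprec d1 b c \<Longrightarrow> sprec d1 a c"
  unfolding wprec_def sprec_def by (meson less_le_trans)

lemma wprec_sprec_trans: "wprec d1 a b \<Longrightarrow> sprec d1 b c \<Longrightarrow> sprec d1 a c"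
  unfolding wprec_def sprec_def by (meson le_less_trans)




definition val :: "nat \<Rightarrow> int list \<Rightarrow> int list list \<Rightarrow> int list \<Rightarrow> real" where
  "val d1 x ws y = real (length ws) - real_of_int (Vcost d1 x ws y)"

lemma SD_val: "SD d1 d2 \<omega> x y = (SUP ws\<in>Dpaths d1 d2 \<omega> x y. val d1 x ws y)"
  unfolding SD_def val_def ..

lemma nil_in: "[] \<in> Dpaths d1 d2 \<omega> x y"
  unfolding Dpaths_def by simp

lemma Dp_ne: "Dpaths d1 d2 \<omega> x y \<noteq> {}"
  using nil_in by blast

lemma val_nil: "drop d1 x = drop d1 y \<Longrightarrow> val d1 x [] y = 0"
  unfolding val_def Vcost_chain by (simp add: projdist_same)

lemma val_le:
  assumes "ws \<in> Dpaths d1 d2 \<omega> x y" "d1 \<ge> 1"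
  shows "val d1 x ws y \<le> real (nat (y!0 - x!0))"
proof -
  have "int (length ws) \<le> int (nat (y!0 - x!0))"
  proof (cases "ws = []")
    case False
    with assms have "wprec d1 x (hd ws)" "sprec d1 (last ws) y" "sorted_wrt (sprec d1) ws"
      unfolding Dpaths_def by auto
    moreover have "0 < d1" using assms(2) by simp
    ultimately have "x!0 \<le> hd ws ! 0" "last ws ! 0 < y!0" "sorted_wrt (sprec d1) ws"
      unfolding wprec_def sprec_def by auto
    then have "int (length ws) \<le> y!0 - x!0"
      using len_bound[of d1 ws "x!0" "y!0"] assms(2) False by blast
    then show ?thesis by simp
  next
    case True then show ?thesis by simp
  qed
  then have "real (length ws) \<le> real (nat (y!0 - x!0))" by linarith
  moreover have "0 \<le> Vcost d1 x ws y" unfolding Vcost_chain by (rule chain_nonneg)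
  ultimately show ?thesis unfolding val_def by linarith
qed

lemma bdd_val: "d1 \<ge> 1 \<Longrightarrow> bdd_above ((\<lambda>ws. val d1 x ws y) ` Dpaths d1 d2 \<omega> x y)"
  by (rule bdd_aboveI2[where M="real (nat (y!0 - x!0))"]) (rule val_le)

lemma SD_nonneg: "d1 \<ge> 1 \<Longrightarrow> drop d1 x = drop d1 y \<Longrightarrow> 0 \<le> SD d1 d2 \<omega> x y"
  unfolding SD_val using cSUP_upper[OF nil_in bdd_val] val_nil by metis

lemma SD_le: "d1 \<ge> 1 \<Longrightarrow> SD d1 d2 \<omega> x y \<le> real (nat (y!0 - x!0))"
  unfolding SD_val by (intro cSUP_least Dp_ne val_le)

definition good :: "nat \<Rightarrow> nat \<Rightarrow> int list \<Rightarrow> bool" where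
  "good d1 d2 x \<longleftrightarrow> x \<in> sites (d1 + d2) \<and> drop d1 x = replicate d2 0"

lemma append_in:
  assumes "ws1 \<in> Dpaths d1 d2 \<omega> x y" "ws2 \<in> Dpaths d1 d2 \<omega> y u"
    "wprec d1 x y" "wprec d1 y u"
  shows "ws1 @ ws2 \<in> Dpaths d1 d2 \<omega> x u"
proof -
  have s1: "sorted_wrt (sprec d1) ws1" and s2: "sorted_wrt (sprec d1) ws2"
    using assms unfolding Dpaths_def by auto
  have cross: "sprec d1 a b" if a: "a \<in> set ws1" and b: "b \<in> set ws2" for a b
  proof -
    have ne: "ws1 \<noteq> []" "ws2 \<noteq> []" using a b by auto
    have "sprec d1 (last ws1) y" "wprec d1 y (hd ws2)" using assms ne unfolding Dpaths_def by auto
    moreover have "wprec d1 a (last ws1)" using sorted_wprec_last[OF s1 a] .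
    moreover have "wprec d1 (hd ws2) b" using sorted_wprec_hd[OF s2 b] .
    ultimately show ?thesis by (meson wprec_sprec_trans sprec_wprec_trans)
  qed
  have hd: "wprec d1 x (hd (ws1 @ ws2))" if "ws1 @ ws2 \<noteq> []"
  proof (cases "ws1 = []")
    case True
    then have "ws2 \<noteq> []" using that by simp
    then have "wprec d1 y (hd ws2)" using assms unfolding Dpaths_def by auto
    then show ?thesis using True assms(3) by (simp add: wprec_trans[of d1 x y])
  next
    case False then show ?thesis using assms unfolding Dpaths_def by auto
  qed
  have lst: "sprec d1 (last (ws1 @ ws2)) u" if "ws1 @ ws2 \<noteq> []"
  proof (cases "ws2 = []")
    case True
    then have "ws1 \<noteq> []" using that by simp
    then have "sprec d1 (last ws1) y" using assms unfolding Dpaths_def by auto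
    then show ?thesis using True assms(4) by (simp add: sprec_wprec_trans[of d1 _ y])
  next
    case False then show ?thesis using assms unfolding Dpaths_def by auto
  qed
  show ?thesis using assms(1,2) s1 s2 cross hd lst unfolding Dpaths_def
    by (auto simp: sorted_wrt_append)
qed

lemma Vcost_append:
  assumes "ws1 \<in> Dpaths d1 d2 \<omega> x y" "ws2 \<in> Dpaths d1 d2 \<omega> y u"
    "x \<in> sites (d1+d2)" "y \<in> sites (d1+d2)" "u \<in> sites (d1+d2)"
  shows "Vcost d1 x (ws1 @ ws2) u \<le> Vcost d1 x ws1 y + Vcost d1 y ws2 u"
proof -
  have l1: "last (x # ws1) \<in> sites (d1+d2)" using assms unfolding Dpaths_def
    by (cases "ws1 = []") auto
  have l2: "hd (ws2 @ [u]) \<in> sites (d1+d2)" using assms unfolding Dpaths_def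
    by (cases ws2) auto
  have e1: "chain d1 (x # ws1 @ ws2 @ [u]) = chain d1 (x # ws1) + projdist d1 (last (x # ws1)) (hd (ws2 @ [u])) + chain d1 (ws2 @ [u])"
    using chain_append[of "x # ws1" "ws2 @ [u]" d1] by simp
  have e2: "chain d1 (x # ws1 @ [y]) = chain d1 (x # ws1) + projdist d1 (last (x # ws1)) y"
    using chain_append[of "x # ws1" "[y]" d1] by simp
  have e3: "chain d1 (y # ws2 @ [u]) = projdist d1 y (hd (ws2 @ [u])) + chain d1 (ws2 @ [u])"
    using chain_append[of "[y]" "ws2 @ [u]" d1] by simp
  have "projdist d1 (last (x # ws1)) (hd (ws2 @ [u])) \<le> projdist d1 (last (x # ws1)) y + projdist d1 y (hd (ws2 @ [u]))"
    using l1 l2 assms(4) by (intro projdist_tri) (auto simp: sites_def)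
  then show ?thesis unfolding Vcost_chain using e1 e2 e3 by simp
qed

lemma SD_superadd:
  assumes "d1 \<ge> 1" "wprec d1 x y" "wprec d1 y u"
    "x \<in> sites (d1+d2)" "y \<in> sites (d1+d2)" "u \<in> sites (d1+d2)"
  shows "SD d1 d2 \<omega> x y + SD d1 d2 \<omega> y u \<le> SD d1 d2 \<omega> x u"
proof -
  have "SD d1 d2 \<omega> x y \<le> SD d1 d2 \<omega> x u - SD d1 d2 \<omega> y u"
    unfolding SD_val[of d1 d2 \<omega> x y]
  proof (rule cSUP_least[OF Dp_ne])
    fix ws1 assume ws1: "ws1 \<in> Dpaths d1 d2 \<omega> x y"
    have "SD d1 d2 \<omega> y u \<le> SD d1 d2 \<omega> x u - val d1 x ws1 y"
      unfolding SD_val[of d1 d2 \<omega> y u]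
    proof (rule cSUP_least[OF Dp_ne])
      fix ws2 assume ws2: "ws2 \<in> Dpaths d1 d2 \<omega> y u"
      have "val d1 x ws1 y + val d1 y ws2 u \<le> val d1 x (ws1 @ ws2) u"
        using Vcost_append[OF ws1 ws2 assms(4-6)] unfolding val_def by simp
      also have "\<dots> \<le> SD d1 d2 \<omega> x u"
        unfolding SD_val using append_in[OF ws1 ws2 assms(2,3)]
        by (intro cSUP_upper bdd_val assms(1))
      finally show "val d1 y ws2 u \<le> SD d1 d2 \<omega> x u - val d1 x ws1 y" by simp
    qed
    then show "val d1 x ws1 y \<le> SD d1 d2 \<omega> x u - SD d1 d2 \<omega> y u" by simp
  qed
  then show ?thesis by simp
qed

lemma SD_mono:
  assumes "d1 \<ge> 1" "wprec d1 y y'" "drop d1 y = drop d1 y'"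
  shows "SD d1 d2 \<omega> x y \<le> SD d1 d2 \<omega> x y'"
  unfolding SD_val
proof (rule cSUP_subset_mono[OF Dp_ne bdd_val[OF assms(1)]])
  show "Dpaths d1 d2 \<omega> x y \<subseteq> Dpaths d1 d2 \<omega> x y'"
    using assms(2) unfolding Dpaths_def by (auto intro: sprec_wprec_trans)
  fix ws
  have "chain d1 ((x # ws) @ [y]) = chain d1 ((x # ws) @ [y'])"
    using chain_append[of "x # ws" "[y]" d1] chain_append[of "x # ws" "[y']" d1]
      projdist_drop[OF assms(3)] by simp
  then show "val d1 x ws y \<le> val d1 x ws y'" unfolding val_def Vcost_chain by simp
qed




lemma prob_perc: "prob_space (perc d \<epsilon>)"
  unfolding perc_def by (intro prob_space_PiM prob_space_measure_pmf)

lemma comp_pred: "w \<in> sites d \<Longrightarrow> Measurable.pred (perc d \<epsilon>) (\<lambda>\<omega>. \<omega> w)"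
proof -
  assume w: "w \<in> sites d"
  have "(\<lambda>\<omega>. \<omega> w) \<in> measurable (perc d \<epsilon>) (measure_pmf (bernoulli_pmf \<epsilon>))"
    unfolding perc_def using w by (rule measurable_component_singleton)
  also have "measurable (perc d \<epsilon>) (measure_pmf (bernoulli_pmf \<epsilon>)) = measurable (perc d \<epsilon>) (count_space UNIV)"
    by (intro measurable_cong_sets) auto
  finally show ?thesis by simp
qed

lemma Dp_char: "ws \<in> Dpaths d1 d2 \<omega> x y \<longleftrightarrow> ws \<in> Dpaths d1 d2 (\<lambda>_. True) x y \<and> (\<forall>w\<in>set ws. \<omega> w)"
  unfolding Dpaths_def by auto

lemma SD_meas:
  assumes "d1 \<ge> 1"
  shows "(\<lambda>\<omega>. SD d1 d2 \<omega> x y) \<in> borel_measurable (perc (d1+d2) \<epsilon>)"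
proof (rule borel_measurableI_le)
  fix c :: real
  let ?M = "perc (d1+d2) \<epsilon>"
  let ?P = "Dpaths d1 d2 (\<lambda>_. True) x y"
  have eq: "{\<omega> \<in> space ?M. SD d1 d2 \<omega> x y \<le> c} =
      {\<omega> \<in> space ?M. \<forall>ws. ws \<in> ?P \<longrightarrow> (\<forall>w\<in>set ws. \<omega> w) \<longrightarrow> val d1 x ws y \<le> c}"
  proof (rule Collect_cong)
    fix \<omega>
    have D: "Dpaths d1 d2 \<omega> x y = {ws. ws \<in> ?P \<and> (\<forall>w\<in>set ws. \<omega> w)}"
      unfolding Dpaths_def by auto
    have "SD d1 d2 \<omega> x y \<le> c \<longleftrightarrow> (\<forall>ws\<in>Dpaths d1 d2 \<omega> x y. val d1 x ws y \<le> c)"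
      unfolding SD_val by (rule cSUP_le_iff[OF Dp_ne bdd_val[OF assms]])
    also have "\<dots> \<longleftrightarrow> (\<forall>ws. ws \<in> ?P \<longrightarrow> (\<forall>w\<in>set ws. \<omega> w) \<longrightarrow> val d1 x ws y \<le> c)"
      unfolding D by blast
    finally show "(\<omega> \<in> space ?M \<and> SD d1 d2 \<omega> x y \<le> c) = (\<omega> \<in> space ?M \<and> (\<forall>ws. ws \<in> ?P \<longrightarrow> (\<forall>w\<in>set ws. \<omega> w) \<longrightarrow> val d1 x ws y \<le> c))"
      by simp
  qed
  have "Measurable.pred ?M (\<lambda>\<omega>. \<forall>ws. ws \<in> ?P \<longrightarrow> (\<forall>w\<in>set ws. \<omega> w) \<longrightarrow> val d1 x ws y \<le> c)"
  proof (intro pred_intros_countable(1) pred_intros_imp')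
    fix ws assume ws: "ws \<in> ?P"
    then have "\<forall>w\<in>set ws. w \<in> sites (d1+d2)" unfolding Dpaths_def by auto
    then have "Measurable.pred ?M (\<lambda>\<omega>. \<forall>w\<in>set ws. \<omega> w)"
      by (intro pred_intros_finite(3)) (auto intro: comp_pred)
    then show "Measurable.pred ?M (\<lambda>\<omega>. (\<forall>w\<in>set ws. \<omega> w) \<longrightarrow> val d1 x ws y \<le> c)"
      by (intro pred_intros_logic(4)) auto
  qed
  then show "{\<omega> \<in> space ?M. SD d1 d2 \<omega> x y \<le> c} \<in> sets ?M"
    unfolding eq pred_def .
qed

lemma SD_integrable:
  assumes "d1 \<ge> 1" "drop d1 x = drop d1 y"
  shows "integrable (perc (d1+d2) \<epsilon>) (\<lambda>\<omega>. SD d1 d2 \<omega> x y)"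
proof -
  interpret prob_space "perc (d1+d2) \<epsilon>" by (rule prob_perc)
  show ?thesis
  proof (rule integrable_const_bound[where B="real (nat (y!0 - x!0))"])
    show "AE \<omega> in perc (d1 + d2) \<epsilon>. norm (SD d1 d2 \<omega> x y) \<le> real (nat (y ! 0 - x ! 0))"
    proof (rule AE_I2)
      fix \<omega>
      have "0 \<le> SD d1 d2 \<omega> x y" by (rule SD_nonneg[OF assms])
      moreover have "SD d1 d2 \<omega> x y \<le> real (nat (y!0 - x!0))" by (rule SD_le[OF assms(1)])
      ultimately show "norm (SD d1 d2 \<omega> x y) \<le> real (nat (y ! 0 - x ! 0))" by simp
    qed
  qed (rule SD_meas[OF assms(1)])
qed

lemma Dp_shift:
  assumes "length s = d1 + d2" "ws \<in> Dpaths d1 d2 \<omega>1 a b" "a \<in> sites (d1+d2)" "b \<in> sites (d1+d2)"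
    "\<And>w. w \<in> sites (d1+d2) \<Longrightarrow> \<omega>1 w \<Longrightarrow> \<omega>2 (vadd w s)"
  shows "map (\<lambda>w. vadd w s) ws \<in> Dpaths d1 d2 \<omega>2 (vadd a s) (vadd b s)"
proof -
  have ws: "\<forall>w\<in>set ws. w \<in> sites (d1+d2) \<and> \<omega>1 w" "sorted_wrt (sprec d1) ws"
    "ws \<noteq> [] \<longrightarrow> wprec d1 a (hd ws) \<and> sprec d1 (last ws) b"
    using assms(2) unfolding Dpaths_def by auto
  have sp: "sprec d1 (vadd u s) (vadd v s) \<longleftrightarrow> sprec d1 u v" if "u \<in> sites (d1+d2)" "v \<in> sites (d1+d2)" for u v
    using that assms(1) unfolding sprec_def sites_def by auto
  have wp: "wprec d1 (vadd u s) (vadd v s) \<longleftrightarrow> wprec d1 u v" if "u \<in> sites (d1+d2)" "v \<in> sites (d1+d2)" for u v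
    using that assms(1) unfolding wprec_def sites_def by auto
  have "sorted_wrt (sprec d1) (map (\<lambda>w. vadd w s) ws)"
    unfolding sorted_wrt_map by (rule sorted_wrt_mono_rel[OF _ ws(2)]) (use ws(1) sp in auto)
  moreover have "\<forall>w\<in>set (map (\<lambda>w. vadd w s) ws). w \<in> sites (d1+d2) \<and> \<omega>2 w"
    using ws(1) assms(1,5) by (auto simp: sites_def)
  moreover have "wprec d1 (vadd a s) (hd (map (\<lambda>w. vadd w s) ws)) \<and> sprec d1 (last (map (\<lambda>w. vadd w s) ws)) (vadd b s)"
    if ne: "ws \<noteq> []"
  proof -
    have "hd ws \<in> sites (d1+d2)" "last ws \<in> sites (d1+d2)" using ne ws(1) by auto
    then show ?thesis using ne ws(3) sp wp assms(3,4) by (simp add: hd_map last_map)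
  qed
  ultimately show ?thesis unfolding Dpaths_def by simp
qed

lemma val_shift:
  assumes "length s = d1 + d2" "\<forall>w\<in>set ws. w \<in> sites (d1+d2)" "a \<in> sites (d1+d2)" "b \<in> sites (d1+d2)"
  shows "val d1 (vadd a s) (map (\<lambda>w. vadd w s) ws) (vadd b s) = val d1 a ws b"
proof -
  have "chain d1 (map (\<lambda>w. vadd w s) (a # ws @ [b])) = chain d1 (a # ws @ [b])"
    using assms by (intro chain_map projdist_vadd) (auto simp: sites_def)
  then show ?thesis unfolding val_def Vcost_chain by simp
qed




lemma vadd_inj: "inj_on (\<lambda>n. vadd n t) (sites (length t))"
proof (rule inj_onI)
  fix u v assume "u \<in> sites (length t)" "v \<in> sites (length t)" "vadd u t = vadd v t"
  then show "u = v"
  proof (intro nth_equalityI)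
    fix i assume "i < length u"
    then have "vadd u t ! i = vadd v t ! i" using \<open>vadd u t = vadd v t\<close> by simp
    then show "u ! i = v ! i" using \<open>i < length u\<close> \<open>u \<in> sites (length t)\<close> \<open>v \<in> sites (length t)\<close>
      by (simp add: sites_def)
  qed (simp add: sites_def)
qed

lemma SD_shift:
  assumes "t \<in> sites (d1+d2)" "y \<in> sites (d1+d2)"
  shows "SD d1 d2 (\<lambda>n\<in>sites (d1+d2). \<omega> (vadd n t)) (replicate (d1+d2) 0) y = SD d1 d2 \<omega> t (vadd y t)"
proof -
  let ?D = "sites (d1+d2)"
  let ?\<omega> = "\<lambda>n\<in>?D. \<omega> (vadd n t)"
  let ?Z = "replicate (d1+d2) 0"
  let ?f = "\<lambda>w. vadd w t"
  have lt: "length t = d1 + d2" using assms by (simp add: sites_def)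
  have Zt: "vadd ?Z t = t" using lt by (intro nth_equalityI) auto
  have ZD: "?Z \<in> ?D" by (simp add: sites_def)
  have set_eq: "Dpaths d1 d2 \<omega> t (vadd y t) = map ?f ` Dpaths d1 d2 ?\<omega> ?Z y"
  proof
    show "map ?f ` Dpaths d1 d2 ?\<omega> ?Z y \<subseteq> Dpaths d1 d2 \<omega> t (vadd y t)"
    proof
      fix ws' assume "ws' \<in> map ?f ` Dpaths d1 d2 ?\<omega> ?Z y"
      then obtain ws where ws: "ws \<in> Dpaths d1 d2 ?\<omega> ?Z y" "ws' = map ?f ws" by auto
      have "map ?f ws \<in> Dpaths d1 d2 \<omega> (vadd ?Z t) (vadd y t)"
      proof (rule Dp_shift[OF lt ws(1) ZD assms(2)])
        fix w assume "w \<in> ?D" "?\<omega> w"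
        then show "\<omega> (vadd w t)" by simp
      qed
      then show "ws' \<in> Dpaths d1 d2 \<omega> t (vadd y t)" using ws(2) Zt by simp
    qed
  next
    show "Dpaths d1 d2 \<omega> t (vadd y t) \<subseteq> map ?f ` Dpaths d1 d2 ?\<omega> ?Z y"
    proof
      fix ws assume ws: "ws \<in> Dpaths d1 d2 \<omega> t (vadd y t)"
      let ?nt = "map uminus t"
      have vD: "vadd w ?nt \<in> ?D" if "w \<in> ?D" for w using that lt by (simp add: sites_def)
      have l2: "length ?nt = d1 + d2" using lt by simp
      have yD: "vadd y t \<in> ?D" using assms lt by (auto simp: sites_def)
      have "map (\<lambda>w. vadd w ?nt) ws \<in> Dpaths d1 d2 ?\<omega> (vadd t ?nt) (vadd (vadd y t) ?nt)"
      proof (rule Dp_shift[OF l2 ws assms(1) yD])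
        fix w assume "w \<in> ?D" "\<omega> w"
        then show "?\<omega> (vadd w ?nt)" using vD vadd_neg[of w t] lt by (simp add: sites_def)
      qed
      moreover have "vadd t ?nt = ?Z" using lt by (intro nth_equalityI) auto
      moreover have "vadd (vadd y t) ?nt = y" using lt assms by (intro nth_equalityI) (auto simp: sites_def)
      moreover have "map ?f (map (\<lambda>w. vadd w ?nt) ws) = ws"
      proof -
        have "\<forall>w\<in>set ws. w \<in> ?D" using ws unfolding Dpaths_def by auto
        then show ?thesis using lt unfolding map_map o_def by (intro map_idI) (auto simp: vadd_neg sites_def)
      qed
      ultimately show "ws \<in> map ?f ` Dpaths d1 d2 ?\<omega> ?Z y" by (metis image_eqI)
    qed
  qed
  have "SD d1 d2 \<omega> t (vadd y t) = (SUP ws\<in>Dpaths d1 d2 ?\<omega> ?Z y. val d1 t (map ?f ws) (vadd y t))"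
    unfolding SD_val set_eq image_image by simp
  also have "\<dots> = (SUP ws\<in>Dpaths d1 d2 ?\<omega> ?Z y. val d1 ?Z ws y)"
  proof (rule SUP_cong[OF refl])
    fix ws assume "ws \<in> Dpaths d1 d2 ?\<omega> ?Z y"
    then have "\<forall>w\<in>set ws. w \<in> ?D" unfolding Dpaths_def by auto
    then show "val d1 t (map ?f ws) (vadd y t) = val d1 ?Z ws y"
      using val_shift[of t d1 d2 ws ?Z y] lt ZD assms Zt by simp
  qed
  finally show ?thesis unfolding SD_val by simp
qed

lemma shift_integral:
  assumes "d1 \<ge> 1" "t \<in> sites (d1+d2)" "y \<in> sites (d1+d2)"
  shows "(\<integral>\<omega>. SD d1 d2 \<omega> (replicate (d1+d2) 0) y \<partial>perc (d1+d2) \<epsilon>)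
       = (\<integral>\<omega>. SD d1 d2 \<omega> t (vadd y t) \<partial>perc (d1+d2) \<epsilon>)"
proof -
  let ?D = "sites (d1+d2)"
  let ?B = "measure_pmf (bernoulli_pmf \<epsilon>)"
  let ?M = "perc (d1+d2) \<epsilon>"
  let ?T = "\<lambda>\<omega>. \<lambda>n\<in>?D. \<omega> (vadd n t)"
  have lt: "length t = d1 + d2" using assms by (simp add: sites_def)
  have inj: "inj_on (\<lambda>n. vadd n t) ?D" using vadd_inj[of t] lt by simp
  have fD: "(\<lambda>n. vadd n t) \<in> ?D \<rightarrow> ?D" using lt by (auto simp: sites_def)
  have distr: "distr ?M ?M ?T = ?M"
    unfolding perc_def using distr_PiM_reindex[of ?D "\<lambda>_. ?B", OF prob_space_measure_pmf inj fD]
    by simp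
  have Tm: "?T \<in> measurable ?M ?M"
    unfolding perc_def
  proof (rule measurable_restrict)
    fix n assume "n \<in> ?D"
    then have "vadd n t \<in> ?D" using fD by auto
    then show "(\<lambda>\<omega>. \<omega> (vadd n t)) \<in> measurable (Pi\<^sub>M ?D (\<lambda>_. ?B)) ?B"
      by (rule measurable_component_singleton)
  qed
  have "(\<integral>\<omega>. SD d1 d2 \<omega> (replicate (d1+d2) 0) y \<partial>?M)
      = (\<integral>\<omega>. SD d1 d2 \<omega> (replicate (d1+d2) 0) y \<partial>distr ?M ?M ?T)" using distr by simp
  also have "\<dots> = (\<integral>\<omega>. SD d1 d2 (?T \<omega>) (replicate (d1+d2) 0) y \<partial>?M)"
    by (rule integral_distr[OF Tm SD_meas[OF assms(1)]])
  also have "\<dots> = (\<integral>\<omega>. SD d1 d2 \<omega> t (vadd y t) \<partial>?M)"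
    using SD_shift[OF assms(2,3)] by simp
  finally show ?thesis .
qed




lemma target_facts:
  assumes "length z = d1" "\<forall>r\<in>set z. r > 0"
  shows "target d2 z n \<in> sites (d1+d2)" "drop d1 (target d2 z n) = replicate d2 0"
    "\<And>i. i < d1 \<Longrightarrow> target d2 z n ! i = \<lfloor>real n * z ! i\<rfloor>"
    "\<And>i. i < d1 \<Longrightarrow> 0 \<le> target d2 z n ! i"
proof -
  show "target d2 z n \<in> sites (d1+d2)" "drop d1 (target d2 z n) = replicate d2 0"
    using assms(1) by (auto simp: target_def sites_def)
  show t: "target d2 z n ! i = \<lfloor>real n * z ! i\<rfloor>" if "i < d1" for i
    using that assms(1) by (simp add: target_def nth_append)
  show "0 \<le> target d2 z n ! i" if "i < d1" for i
  proof -
    have "z ! i > 0" using assms that by auto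
    then show ?thesis using t[OF that] by simp
  qed
qed

theorem mainTheorem4:
  fixes d1 d2 :: nat and \<epsilon> :: real and z :: "real list"
  assumes "d1 \<ge> 1"
    and "0 \<le> \<epsilon>" and "\<epsilon> \<le> 1"
    and "length z = d1" and "\<forall>r\<in>set z. r > 0"
  shows "convergent (\<lambda>n::nat. (1 / real n) *
           (\<integral>\<omega>. SD d1 d2 \<omega> (replicate (d1 + d2) 0) (target d2 z n) \<partial>perc (d1 + d2) \<epsilon>))"
proof -
  let ?M = "perc (d1+d2) \<epsilon>"
  let ?Z = "replicate (d1 + d2) 0 :: int list"
  let ?T = "target d2 z"
  define a where "a n = (\<integral>\<omega>. SD d1 d2 \<omega> ?Z (?T n) \<partial>?M)" for n
  interpret prob_space ?M by (rule prob_perc)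
  note tf = target_facts[OF assms(4,5)]
  have ZD: "?Z \<in> sites (d1+d2)" by (simp add: sites_def)
  have dZ: "drop d1 ?Z = replicate d2 0" by simp
  have lenT: "length (?T n) = d1 + d2" for n using tf(1) by (simp add: sites_def)
  have good_vadd: "vadd (?T n) (?T m) \<in> sites (d1+d2)" "drop d1 (vadd (?T n) (?T m)) = replicate d2 0" for n m
  proof -
    show "vadd (?T n) (?T m) \<in> sites (d1+d2)" using lenT[of n] lenT[of m] by (simp add: sites_def)
    show "drop d1 (vadd (?T n) (?T m)) = replicate d2 0"
      unfolding vadd_drop tf(2) by (intro nth_equalityI) auto
  qed
  have int: "integrable ?M (\<lambda>\<omega>. SD d1 d2 \<omega> x y)" if "drop d1 x = drop d1 y" for x y
    by (rule SD_integrable[OF assms(1) that])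
  have sup: "a m + a n \<le> a (m + n)" for m n
  proof -
    have e1: "a n = (\<integral>\<omega>. SD d1 d2 \<omega> (?T m) (vadd (?T n) (?T m)) \<partial>?M)"
      unfolding a_def by (rule shift_integral[OF assms(1) tf(1) tf(1)])
    have w1: "wprec d1 ?Z (?T m)" using tf(4) by (simp add: wprec_def)
    have w2: "wprec d1 (?T m) (vadd (?T n) (?T m))" using tf(4) lenT by (simp add: wprec_def)
    have w3: "wprec d1 (vadd (?T n) (?T m)) (?T (m+n))"
    proof -
      have "\<lfloor>real n * z ! i\<rfloor> + \<lfloor>real m * z ! i\<rfloor> \<le> \<lfloor>real (m+n) * z ! i\<rfloor>" for i
      proof -
        have "real (m+n) * z ! i = real n * z ! i + real m * z ! i" by (simp add: algebra_simps)
        then show ?thesis by (simp add: le_floor_add)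
      qed
      then show ?thesis using tf(3) lenT by (simp add: wprec_def)
    qed
    have "a m + a n = (\<integral>\<omega>. SD d1 d2 \<omega> ?Z (?T m) \<partial>?M) + (\<integral>\<omega>. SD d1 d2 \<omega> (?T m) (vadd (?T n) (?T m)) \<partial>?M)"
      by (subst e1) (simp add: a_def)
    also have "\<dots> = (\<integral>\<omega>. SD d1 d2 \<omega> ?Z (?T m) + SD d1 d2 \<omega> (?T m) (vadd (?T n) (?T m)) \<partial>?M)"
    proof -
      have i1: "integrable ?M (\<lambda>\<omega>. SD d1 d2 \<omega> ?Z (?T m))" by (intro int) (simp add: tf(2))
      have i2: "integrable ?M (\<lambda>\<omega>. SD d1 d2 \<omega> (?T m) (vadd (?T n) (?T m)))"
        by (intro int) (simp add: tf(2) good_vadd(2))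
      show ?thesis using Bochner_Integration.integral_add[OF i1 i2] by simp
    qed
    also have "\<dots> \<le> (\<integral>\<omega>. SD d1 d2 \<omega> ?Z (vadd (?T n) (?T m)) \<partial>?M)"
    proof (rule integral_mono)
      show "integrable ?M (\<lambda>\<omega>. SD d1 d2 \<omega> ?Z (?T m) + SD d1 d2 \<omega> (?T m) (vadd (?T n) (?T m)))"
      proof -
        have i1: "integrable ?M (\<lambda>\<omega>. SD d1 d2 \<omega> ?Z (?T m))" by (intro int) (simp add: tf(2))
        have i2: "integrable ?M (\<lambda>\<omega>. SD d1 d2 \<omega> (?T m) (vadd (?T n) (?T m)))"
          by (intro int) (simp add: tf(2) good_vadd(2))
        show ?thesis by (rule Bochner_Integration.integrable_add[OF i1 i2])
      qed
      show "integrable ?M (\<lambda>\<omega>. SD d1 d2 \<omega> ?Z (vadd (?T n) (?T m)))"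
        by (intro int) (simp add: good_vadd(2))
      fix \<omega>
      show "SD d1 d2 \<omega> ?Z (?T m) + SD d1 d2 \<omega> (?T m) (vadd (?T n) (?T m)) \<le> SD d1 d2 \<omega> ?Z (vadd (?T n) (?T m))"
        by (rule SD_superadd[OF assms(1) w1 w2 ZD tf(1) good_vadd(1)])
    qed
    also have "\<dots> \<le> a (m + n)"
      unfolding a_def
    proof (rule integral_mono)
      show "integrable ?M (\<lambda>\<omega>. SD d1 d2 \<omega> ?Z (vadd (?T n) (?T m)))"
        by (intro int) (simp add: good_vadd(2))
      show "integrable ?M (\<lambda>\<omega>. SD d1 d2 \<omega> ?Z (?T (m+n)))"
        by (intro int) (simp add: tf(2))
      fix \<omega>
      show "SD d1 d2 \<omega> ?Z (vadd (?T n) (?T m)) \<le> SD d1 d2 \<omega> ?Z (?T (m+n))"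
        by (rule SD_mono[OF assms(1) w3]) (simp add: tf(2) good_vadd(2))
    qed
    finally show ?thesis .
  qed
  have nn: "0 \<le> a n" for n
    unfolding a_def
  proof (rule Bochner_Integration.integral_nonneg)
    fix \<omega> show "0 \<le> SD d1 d2 \<omega> ?Z (?T n)" by (rule SD_nonneg[OF assms(1)]) (simp add: tf(2))
  qed
  have bd: "a n \<le> z ! 0 * real n" for n
  proof -
    have z0: "z ! 0 > 0" using assms(1,4,5) by auto
    have "a n \<le> (\<integral>\<omega>. real (nat (?T n ! 0 - ?Z ! 0)) \<partial>?M)"
      unfolding a_def
    proof (rule Bochner_Integration.integral_mono)
      show "integrable ?M (\<lambda>\<omega>. SD d1 d2 \<omega> ?Z (?T n))" by (intro int) (simp add: tf(2))
      show "integrable ?M (\<lambda>\<omega>. real (nat (?T n ! 0 - ?Z ! 0)))" by simp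
      fix \<omega> show "SD d1 d2 \<omega> ?Z (?T n) \<le> real (nat (?T n ! 0 - ?Z ! 0))" by (rule SD_le[OF assms(1)])
    qed
    also have "\<dots> = real (nat (?T n ! 0 - ?Z ! 0))" by (simp add: prob_space)
    also have "\<dots> \<le> z ! 0 * real n"
    proof -
      have "?T n ! 0 = \<lfloor>real n * z ! 0\<rfloor>" using tf(3) assms(1) by simp
      moreover have "0 \<le> \<lfloor>real n * z ! 0\<rfloor>" using z0 by simp
      ultimately show ?thesis using assms(1) by (simp add: mult.commute)
    qed
    finally show ?thesis .
  qed
  have "convergent (\<lambda>n. (1/real n) * a n)" by (rule fekete[OF sup nn bd])
  then show ?thesis unfolding a_def .
qed


end
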